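(* Consider four agents in the plane with positions $p_1,p_2,p_3,p_4\in\mathbb{R}^2$, interaction graph with edge set $E=\{(1,2),(1,3),(2,3),(3,4)\}$, feasible desired distances, a potential satisfying the stated assumptions, and the dynamics $\dot p_i=-\sum_{j\in\mathcal{N}_i} g_{ij}(p_i-p_j)$. Let $p^*$ be an undesired equilibrium (i.e. $p^*\in\mathcal{Q}_I$) at which $p^*_1,p^*_2,p^*_3$ are collinear. Then, for a suitable labeling $\{i,j,k\}=\{1,2,3\}$, exactly one of the following configurations occurs, with the stated properties (all quantities evaluated at $p^*$): (a) the three agents are distinct and $p^*_j$ lies strictly between $p^*_i$ and $p^*_k$ on the line; then $g_{ij}<0$, $g_{jk}<0$, $g_{ik}>0$, $g_{ij}+g_{ik}<0$ and $g_{jk}+g_{ik}<0$; (b) $p^*_j=p^*_k\neq p^*_i$ (a pair of agents coincide and the remaining agent is at another position); then $g_{jk}<0$ and $g_{ij}=g_{ik}=0$; (c) $p^*_i=p^*_j=p^*_k$; then $g_{ij}<0$, $g_{jk}<0$, $g_{ik}<0$.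
   Context: Agents have single-integrator dynamics $\dot p_i=u_i$. For each edge $(i,j)$ a desired distance $\bar d_{ij}>0$ is given; the set of desired distances is feasible, meaning that whenever $(i,j),(j,k),(k,i)$ are edges, $\bar d_{ij}+\bar d_{jk}>\bar d_{ki}$, $\bar d_{jk}+\bar d_{ki}>\bar d_{ij}$, $\bar d_{ki}+\bar d_{ij}>\bar d_{jk}$ (here this applies to the triangle $1,2,3$). A potential $\phi(x,\bar d)$ is given such that for each fixed $\bar d>0$: $\phi(\cdot,\bar d)\ge 0$; $g(x,\bar d):=\partial\phi(x,\bar d)/\partial x$ is strictly monotonically increasing in $x$; $\phi$ and $g$ are continuously differentiable on $x\in(-\bar d^2,\infty)$ and each equals zero if and only if $x=0$; $\phi(\cdot,\bar d)$ is analytic in a neighbourhood of $0$. Write $z_{ij}=p_i-p_j$, $e_{ij}=\|z_{ij}\|^2-\bar d_{ij}^2$, $g_{ij}=g(e_{ij},\bar d_{ij})$ (symmetric in $i,j$), and $\mathcal{N}_i$ for the neighbours of $i$. The dynamics $\dot p_i=-\sum_{j\in\mathcal{N}_i}g_{ij}z_{ij}$ is the negative gradient of $V=\tfrac12\sum_{(i,j)\in E}\phi(e_{ij},\bar d_{ij})$. The equilibrium set is $\mathcal{Q}=\{p:\sum_{j\in\mathcal{N}_i}g_{ij}z_{ij}=0\ \forall i\}$; the desired set is $\mathcal{Q}_C=\{p\in\mathcal{Q}:\|z_{ij}\|=\bar d_{ij}\ \forall (i,j)\in E\}$; the undesired equilibrium set is $\mathcal{Q}_I=\mathcal{Q}\setminus\mathcal{Q}_C$.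 *)

theory Defs
  imports "HOL-Analysis.Analysis"
begin

definition real_analytic_at :: "(real \<Rightarrow> real) \<Rightarrow> real \<Rightarrow> bool" where
  "real_analytic_at f x0 \<longleftrightarrow>
     (\<exists>r>0. \<exists>a::nat \<Rightarrow> real. \<forall>x. \<bar>x - x0\<bar> < r \<longrightarrow> (\<lambda>n. a n * (x - x0) ^ n) sums f x)"

definition admissible_potential ::
  "(real \<Rightarrow> real \<Rightarrow> real) \<Rightarrow> (real \<Rightarrow> real \<Rightarrow> real) \<Rightarrow> bool" where
  "admissible_potential \<phi> g \<longleftrightarrow>
     (\<forall>d>0.
        (\<forall>x\<ge>-(d^2). \<phi> x d \<ge> 0)
      \<and> (\<forall>x>-(d^2). ((\<lambda>y. \<phi> y d) has_real_derivative g x d) (at x))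
      \<and> strict_mono_on {-(d^2)..} (\<lambda>x. g x d)
      \<and> (\<lambda>x. \<phi> x d) C1_differentiable_on {-(d^2)<..}
      \<and> (\<lambda>x. g x d) C1_differentiable_on {-(d^2)<..}
      \<and> (\<forall>x>-(d^2). \<phi> x d = 0 \<longleftrightarrow> x = 0)
      \<and> (\<forall>x>-(d^2). g x d = 0 \<longleftrightarrow> x = 0)
      \<and> (\<exists>r>0. \<forall>x. \<bar>x\<bar> < r \<longrightarrow> real_analytic_at (\<lambda>y. \<phi> y d) x))"

type_synonym config = "nat \<Rightarrow> real^2"

definition nbrs :: "(nat \<times> nat) set \<Rightarrow> nat \<Rightarrow> nat set" where
  "nbrs E i = {j. (i, j) \<in> E \<or> (j, i) \<in> E}"

definition err :: "config \<Rightarrow> (nat \<Rightarrow> nat \<Rightarrow> real) \<Rightarrow> nat \<Rightarrow> nat \<Rightarrow> real" where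
  "err p dbar i j = (norm (p i - p j))^2 - (dbar i j)^2"

definition gij :: "(real \<Rightarrow> real \<Rightarrow> real) \<Rightarrow> config \<Rightarrow> (nat \<Rightarrow> nat \<Rightarrow> real) \<Rightarrow> nat \<Rightarrow> nat \<Rightarrow> real" where
  "gij g p dbar i j = g (err p dbar i j) (dbar i j)"

definition equilibrium ::
  "(real \<Rightarrow> real \<Rightarrow> real) \<Rightarrow> (nat \<times> nat) set \<Rightarrow> (nat \<Rightarrow> nat \<Rightarrow> real) \<Rightarrow> config \<Rightarrow> bool" where
  "equilibrium g E dbar p \<longleftrightarrow>
     (\<forall>i. (\<Sum>j\<in>nbrs E i. gij g p dbar i j *\<^sub>R (p i - p j)) = 0)"

definition desired_eq ::
  "(real \<Rightarrow> real \<Rightarrow> real) \<Rightarrow> (nat \<times> nat) set \<Rightarrow> (nat \<Rightarrow> nat \<Rightarrow> real) \<Rightarrow> config \<Rightarrow> bool" where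
  "desired_eq g E dbar p \<longleftrightarrow>
     equilibrium g E dbar p \<and> (\<forall>(i, j)\<in>E. norm (p i - p j) = dbar i j)"

definition undesired_eq ::
  "(real \<Rightarrow> real \<Rightarrow> real) \<Rightarrow> (nat \<times> nat) set \<Rightarrow> (nat \<Rightarrow> nat \<Rightarrow> real) \<Rightarrow> config \<Rightarrow> bool" where
  "undesired_eq g E dbar p \<longleftrightarrow> equilibrium g E dbar p \<and> \<not> desired_eq g E dbar p"

definition E4 :: "(nat \<times> nat) set" where
  "E4 = {(1,2), (1,3), (2,3), (3,4)}"

end

theory Submission
  imports Defs
begin

lemma core:
  fixes p :: "nat \<Rightarrow> real^2" and G d :: "nat \<Rightarrow> nat \<Rightarrow> real" and a b c :: nat
  assumes Gs: "\<And>x y. G x y = G y x"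
    and sab: "G a b < 0 \<longleftrightarrow> norm (p a - p b) < d a b" "G a b > 0 \<longleftrightarrow> norm (p a - p b) > d a b"
    and sbc: "G b c < 0 \<longleftrightarrow> norm (p b - p c) < d b c" "G b c > 0 \<longleftrightarrow> norm (p b - p c) > d b c"
    and sac: "G a c < 0 \<longleftrightarrow> norm (p a - p c) < d a c" "G a c > 0 \<longleftrightarrow> norm (p a - p c) > d a c"
    and dp: "d a b > 0" "d b c > 0" "d a c > 0"
    and feas: "d a b + d b c > d a c"
    and eqa: "G a b *\<^sub>R (p a - p b) + G a c *\<^sub>R (p a - p c) = 0"
    and eqb: "G b a *\<^sub>R (p b - p a) + G b c *\<^sub>R (p b - p c) = 0"
    and lab: "{a, b, c} = {1, 2, 3::nat}"
    and bet: "p b \<in> closed_segment (p a) (p c)"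
  shows "\<exists>i j k. {i, j, k} = {1, 2, 3::nat} \<and>
     ((p i \<noteq> p j \<and> p j \<noteq> p k \<and> p i \<noteq> p k \<and> p j \<in> open_segment (p i) (p k) \<and>
         G i j < 0 \<and> G j k < 0 \<and> G i k > 0 \<and>
         G i j + G i k < 0 \<and> G j k + G i k < 0)
    \<or> (p j = p k \<and> p j \<noteq> p i \<and>
         G j k < 0 \<and> G i j = 0 \<and> G i k = 0)
    \<or> (p i = p j \<and> p j = p k \<and>
         G i j < 0 \<and> G j k < 0 \<and> G i k < 0))"
proof -
  have Gba: "G b a = G a b" by (rule Gs)
  obtain u where u: "0 \<le> u" "u \<le> 1" "p b = (1 - u) *\<^sub>R p a + u *\<^sub>R p c"
    using bet by (auto simp: in_segment)
  have zab: "p a - p b = u *\<^sub>R (p a - p c)" using u(3) by (simp add: algebra_simps)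
  have zbc: "p b - p c = (1 - u) *\<^sub>R (p a - p c)" using u(3) by (simp add: algebra_simps)
  show ?thesis
  proof (cases "p a = p c")
    case True
    hence "p b = p a" using u(3) by (simp add: algebra_simps)
    hence "G a b < 0" "G b c < 0" "G a c < 0" using sab sbc sac dp True by auto
    thus ?thesis using lab True \<open>p b = p a\<close> by (intro exI[of _ a] exI[of _ b] exI[of _ c]) auto
  next
    case ne: False
    have nab: "norm (p a - p b) = u * norm (p a - p c)" using zab u by simp
    have nbc: "norm (p b - p c) = (1 - u) * norm (p a - p c)" using zbc u by simp
    have e1: "(G a b * u + G a c) *\<^sub>R (p a - p c) = 0"
      using eqa zab by (simp add: algebra_simps)
    hence e1': "G a c = - (G a b * u)" using ne by simp
    have zba: "p b - p a = - (u *\<^sub>R (p a - p c))" using zab by (metis minus_diff_eq)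
    have e2: "(- G a b * u + G b c * (1 - u)) *\<^sub>R (p a - p c) = 0"
      using eqb unfolding zba zbc Gba by (simp add: algebra_simps)
    hence e2': "G b c * (1 - u) = G a b * u" using ne by simp
    consider "u = 0" | "u = 1" | "0 < u \<and> u < 1" using u by linarith
    then show ?thesis
    proof cases
      case 1
      hence "p b = p a" using u(3) by simp
      hence "G a b < 0" using sab dp by auto
      moreover have "G a c = 0" "G b c = 0" using e1' e2' 1 by auto
      ultimately show ?thesis using lab \<open>p b = p a\<close> ne Gs[of c a] Gs[of c b]
        by (intro exI[of _ c] exI[of _ a] exI[of _ b]) (auto simp: insert_commute)
    next
      case 2
      hence "p b = p c" using u(3) by simp
      hence "G b c < 0" using sbc dp by auto
      moreover have "G a b = 0" "G a c = 0" using e1' e2' 2 by auto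
      ultimately show ?thesis using lab \<open>p b = p c\<close> ne
        by (intro exI[of _ a] exI[of _ b] exI[of _ c]) auto
    next
      case 3
      have pos: "norm (p a - p c) > 0" using ne by simp
      have gac: "G a c > 0"
      proof (rule ccontr)
        assume "\<not> G a c > 0"
        hence "G a c \<le> 0" by simp
        hence "G a b * u \<ge> 0" using e1' by linarith
        hence "G a b \<ge> 0" using 3 by (auto simp: zero_le_mult_iff)
        hence "G b c * (1 - u) \<ge> 0" using e2' 3 by simp
        hence gbc: "G b c \<ge> 0" using 3 by (auto simp: zero_le_mult_iff)
        have "norm (p a - p b) \<ge> d a b" using sab \<open>G a b \<ge> 0\<close> by linarith
        moreover have "norm (p b - p c) \<ge> d b c" using sbc gbc by linarith
        moreover have "norm (p a - p c) \<le> d a c" using sac \<open>G a c \<le> 0\<close> by linarith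
        moreover have "norm (p a - p c) = norm (p a - p b) + norm (p b - p c)"
          using nab nbc by (simp add: algebra_simps)
        ultimately show False using feas by linarith
      qed
      have "G a b * u < 0" using e1' gac by linarith
      hence gab: "G a b < 0" using 3 by (auto simp: mult_less_0_iff)
      have "G b c * (1 - u) < 0" using e2' \<open>G a b * u < 0\<close> by linarith
      hence gbc: "G b c < 0" using 3 by (auto simp: mult_less_0_iff)
      have "G a b * (1 - u) < 0" using gab 3 by (simp add: mult_neg_pos)
      hence s1: "G a b + G a c < 0" using e1' by (simp add: algebra_simps)
      have "G b c * u < 0" using gbc 3 by (simp add: mult_neg_pos)
      hence s2: "G b c + G a c < 0" using e1' e2' by (simp add: algebra_simps)
      have nab0: "p a \<noteq> p b" using nab pos 3 by auto
      have nbc0: "p b \<noteq> p c" using nbc pos 3 by auto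
      have os: "p b \<in> open_segment (p a) (p c)" using ne 3 u(3) by (auto simp: in_segment)
      show ?thesis using lab nab0 nbc0 ne os gab gbc gac s1 s2
        by (intro exI[of _ a] exI[of _ b] exI[of _ c]) auto
    qed
  qed
qed

lemma gsign:
  assumes pot: "admissible_potential \<phi> g" and d: "d > 0" and x: "x \<ge> -(d^2)"
  shows "g x d < 0 \<longleftrightarrow> x < 0" "g x d > 0 \<longleftrightarrow> x > 0"
proof -
  have sm: "strict_mono_on {-(d^2)..} (\<lambda>x. g x d)" and z: "\<forall>x>-(d^2). g x d = 0 \<longleftrightarrow> x = 0"
    using pot d unfolding admissible_potential_def by blast+
  have d0: "-(d^2) < 0" using d by simp
  have g0: "g 0 d = 0" using z d0 by auto
  have lt: "g y d < g z d" if "-(d^2) \<le> y" "y < z" for y z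
    using strict_mono_onD[OF sm, of y z] that by auto
  show "g x d < 0 \<longleftrightarrow> x < 0"
    using lt[of x 0] lt[of 0 x] x d0 g0 by (cases "x < 0"; cases "x = 0") auto
  show "g x d > 0 \<longleftrightarrow> x > 0"
    using lt[of x 0] lt[of 0 x] x d0 g0 by (cases "x < 0"; cases "x = 0") auto
qed

lemma sq_lt: "(0::real) \<le> n \<Longrightarrow> 0 < d \<Longrightarrow> n^2 < d^2 \<longleftrightarrow> n < d"
  by (auto intro: power_strict_mono power_less_imp_less_base)

lemma sq_gt: "(0::real) \<le> n \<Longrightarrow> 0 < d \<Longrightarrow> d^2 < n^2 \<longleftrightarrow> d < n"
  by (auto intro: power_strict_mono power_less_imp_less_base)

lemma pairsign:
  assumes pot: "admissible_potential \<phi> g" and d: "dbar i j > 0"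
  shows "gij g p dbar i j < 0 \<longleftrightarrow> norm (p i - p j) < dbar i j"
    "gij g p dbar i j > 0 \<longleftrightarrow> norm (p i - p j) > dbar i j"
proof -
  have x: "err p dbar i j \<ge> -((dbar i j)^2)" unfolding err_def by simp
  have n: "norm (p i - p j) \<ge> 0" by simp
  show "gij g p dbar i j < 0 \<longleftrightarrow> norm (p i - p j) < dbar i j"
    unfolding gij_def gsign(1)[OF pot d x] unfolding err_def
    using sq_lt[OF n d] by simp
  show "gij g p dbar i j > 0 \<longleftrightarrow> norm (p i - p j) > dbar i j"
    unfolding gij_def gsign(2)[OF pot d x] unfolding err_def
    using sq_gt[OF n d] by simp
qed

theorem lemma2:
  fixes \<phi> g :: "real \<Rightarrow> real \<Rightarrow> real"
    and dbar :: "nat \<Rightarrow> nat \<Rightarrow> real"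
    and p :: config
  assumes pot: "admissible_potential \<phi> g"
    and dsym: "\<And>i j. dbar i j = dbar j i"
    and dpos: "\<forall>(i, j)\<in>E4. dbar i j > 0"
    and feas: "dbar 1 2 + dbar 2 3 > dbar 1 3" "dbar 2 3 + dbar 1 3 > dbar 1 2"
              "dbar 1 3 + dbar 1 2 > dbar 2 3"
    and QI: "undesired_eq g E4 dbar p"
    and col: "collinear {p 1, p 2, p 3}"
  shows "\<exists>i j k. {i, j, k} = {1, 2, 3::nat} \<and>
     ((p i \<noteq> p j \<and> p j \<noteq> p k \<and> p i \<noteq> p k \<and> p j \<in> open_segment (p i) (p k) \<and>
         gij g p dbar i j < 0 \<and> gij g p dbar j k < 0 \<and> gij g p dbar i k > 0 \<and>
         gij g p dbar i j + gij g p dbar i k < 0 \<and> gij g p dbar j k + gij g p dbar i k < 0)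
    \<or> (p j = p k \<and> p j \<noteq> p i \<and>
         gij g p dbar j k < 0 \<and> gij g p dbar i j = 0 \<and> gij g p dbar i k = 0)
    \<or> (p i = p j \<and> p j = p k \<and>
         gij g p dbar i j < 0 \<and> gij g p dbar j k < 0 \<and> gij g p dbar i k < 0))"
proof -
  let ?G = "gij g p dbar"
  have gs: "\<And>i j. ?G i j = ?G j i"
    unfolding gij_def err_def using dsym by (simp add: norm_minus_commute)
  have d12: "dbar 1 2 > 0" and d13: "dbar 1 3 > 0" and d23: "dbar 2 3 > 0"
    using dpos by (auto simp: E4_def)
  note sy = gs[of 2 1] gs[of 3 1] gs[of 3 2] dsym[of 2 1] dsym[of 3 1] dsym[of 3 2]
    norm_minus_commute[of "p 2" "p 1"] norm_minus_commute[of "p 3" "p 1"] norm_minus_commute[of "p 3" "p 2"]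
  note ps = pairsign[of \<phi> g dbar 1 2 p, OF pot d12] pairsign[of \<phi> g dbar 1 3 p, OF pot d13]
    pairsign[of \<phi> g dbar 2 3 p, OF pot d23]
  have eq: "\<And>i. (\<Sum>j\<in>nbrs E4 i. ?G i j *\<^sub>R (p i - p j)) = 0"
    using QI unfolding undesired_eq_def equilibrium_def by blast
  have n1: "nbrs E4 1 = {2,3}" and n2: "nbrs E4 2 = {1,3}" and n3: "nbrs E4 3 = {1,2,4}"
    and n4: "nbrs E4 4 = {3}" by (auto simp: nbrs_def E4_def)
  have e1: "?G 1 2 *\<^sub>R (p 1 - p 2) + ?G 1 3 *\<^sub>R (p 1 - p 3) = 0"
    using eq[of 1] unfolding n1 by simp
  have e2: "?G 2 1 *\<^sub>R (p 2 - p 1) + ?G 2 3 *\<^sub>R (p 2 - p 3) = 0"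
    using eq[of 2] unfolding n2 by simp
  have e4: "?G 4 3 *\<^sub>R (p 4 - p 3) = 0"
    using eq[of 4] unfolding n4 by simp
  have e34: "?G 3 4 *\<^sub>R (p 3 - p 4) = 0"
  proof -
    have "?G 3 4 *\<^sub>R (p 3 - p 4) = - (?G 4 3 *\<^sub>R (p 4 - p 3))"
      using gs[of 3 4] by (simp add: algebra_simps)
    thus ?thesis using e4 by simp
  qed
  have e3: "?G 3 1 *\<^sub>R (p 3 - p 1) + ?G 3 2 *\<^sub>R (p 3 - p 2) = 0"
    using eq[of 3] e34 unfolding n3 by simp
  have "between (p 2, p 3) (p 1) \<or> between (p 3, p 1) (p 2) \<or> between (p 1, p 2) (p 3)"
    using col collinear_between_cases by blast
  then show ?thesis
  proof (elim disjE)
    assume "between (p 2, p 3) (p 1)"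
    hence b: "p 1 \<in> closed_segment (p 2) (p 3)" by (simp add: between_mem_segment)
    show ?thesis
      apply (rule core[where p=p and G="?G" and d=dbar and a=2 and b=1 and c=3, OF gs])
      apply (unfold sy)
      using ps d12 d13 d23 feas e1 e2[unfolded sy] e3[unfolded sy] b by (simp_all add: sy insert_commute)
  next
    assume "between (p 3, p 1) (p 2)"
    hence b: "p 2 \<in> closed_segment (p 1) (p 3)" by (simp add: between_mem_segment closed_segment_commute)
    show ?thesis
      apply (rule core[where p=p and G="?G" and d=dbar and a=1 and b=2 and c=3, OF gs])
      apply (unfold sy)
      using ps d12 d13 d23 feas e1 e2[unfolded sy] e3[unfolded sy] b by (simp_all add: sy insert_commute)
  next
    assume "between (p 1, p 2) (p 3)"
    hence b: "p 3 \<in> closed_segment (p 1) (p 2)" by (simp add: between_mem_segment)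
    show ?thesis
      apply (rule core[where p=p and G="?G" and d=dbar and a=1 and b=3 and c=2, OF gs])
      apply (unfold sy)
      using ps d12 d13 d23 feas e1 e2[unfolded sy] e3[unfolded sy] b by (simp_all add: sy insert_commute add.commute)
  qed
qed

end
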